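(* Let $a,n\in\mathbb{Z}^+$ with $a>1$. Then $$\sqrt[n]{a} = \lim_{k\to\infty}\frac{(k^{kn}+1)^{kn+1}\bmod (k^{kn^2}-a)}{(k^{kn}+1)^{kn}\bmod (k^{kn^2}-a)} - 1\quad\text{(in }\mathbb{R}),$$ where the limit is over positive integers $k$.
   Context: For integers, $u\bmod m$ denotes the least non-negative remainder of $u$ upon division by $m>0$. $\sqrt[n]{a}$ denotes the positive real $n$-th root of $a$. *)

theory Defs
  imports "HOL-Analysis.Analysis"
begin

end

theory Submission
  imports Defs
begin

lemma omega_pow_eq_1:
  fixes n t :: nat assumes "n > 0"
  shows "cis (2*pi/real n) ^ t = 1 \<longleftrightarrow> n dvd t"
proof
  assume h: "cis (2*pi/real n) ^ t = 1"
  have "cis (2*pi/real n) ^ t = cis (real t * (2*pi/real n))" by (rule Complex.DeMoivre)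
  with h have "cos (real t * (2*pi/real n)) = 1"
    by (metis cis.sel(1) one_complex.sel(1))
  hence "cos (2*pi*real t/real n) = 1" by (simp add: mult_ac)
  then obtain k :: int where "2*pi*real t/real n = real_of_int k * 2 * pi"
    by (subst (asm) cos_one_2pi_int) blast
  hence "real t = real_of_int k * real n" using assms by (simp add: field_simps)
  hence "int t = k * int n" by (metis of_int_eq_iff of_int_mult of_int_of_nat_eq)
  hence "int n dvd int t" by simp
  thus "n dvd t" by simp
next
  assume "n dvd t"
  then obtain q where "t = n*q" by auto
  have "cis (2*pi/real n) ^ n = cis (real n * (2*pi/real n))" by (rule Complex.DeMoivre)
  also have "real n * (2*pi/real n) = 2*pi" using assms by simp
  finally have "cis (2*pi/real n) ^ t = cis (2*pi) ^ q" using \<open>t = n*q\<close>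
    by (simp add: power_mult)
  also have "cis (2*pi) = 1" by (simp add: complex_eq_iff)
  finally show "cis (2*pi/real n) ^ t = 1" by simp
qed

lemma roots_sum:
  fixes n t :: nat assumes "n > 0"
  shows "(\<Sum>j<n. cis (2*pi/real n) ^ (j*t)) = (if n dvd t then of_nat n else 0)"
proof -
  define w where "w = cis (2*pi/real n) ^ t"
  have "(\<Sum>j<n. cis (2*pi/real n) ^ (j*t)) = (\<Sum>j<n. w ^ j)"
    unfolding w_def by (intro sum.cong refl) (metis power_mult mult.commute)
  also have "\<dots> = (if n dvd t then of_nat n else 0)"
  proof (cases "n dvd t")
    case True
    hence "w = 1" using omega_pow_eq_1[OF assms] w_def by simp
    thus ?thesis using True by simp
  next
    case False
    hence "w \<noteq> 1" using omega_pow_eq_1[OF assms] w_def by simp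
    moreover have "w ^ n = 1" unfolding w_def
      by (metis (no_types) assms dvd_triv_right omega_pow_eq_1 power_mult power_mult_distrib mult.commute)
    ultimately show ?thesis using False by (simp add: sum_gp_strict)
  qed
  finally show ?thesis .
qed

lemma filter_identity:
  fixes n m :: nat and x :: real assumes "n > 0"
  shows "of_nat n * complex_of_real (\<Sum>i\<le>m. if n dvd (i+1) then real (m choose i) * x^i else 0)
       = (\<Sum>j<n. cis (2*pi/real n) ^ j * (1 + of_real x * cis (2*pi/real n) ^ j)^m)"
proof -
  define w where "w = cis (2*pi/real n)"
  have "(\<Sum>j<n. w ^ j * (1 + of_real x * w ^ j)^m)
      = (\<Sum>j<n. w ^ j * (\<Sum>i\<le>m. of_nat (m choose i) * (of_real x * w ^ j)^i * 1^(m-i)))"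
    by (intro sum.cong refl) (metis add.commute binomial_ring)
  also have "\<dots> = (\<Sum>j<n. \<Sum>i\<le>m. of_nat (m choose i) * of_real x ^ i * w ^ (j*(i+1)))"
    by (simp add: sum_distrib_left power_mult_distrib algebra_simps power_mult[symmetric] power_add)
  also have "\<dots> = (\<Sum>i\<le>m. of_nat (m choose i) * of_real x ^ i * (\<Sum>j<n. w ^ (j*(i+1))))"
    by (subst sum.swap) (simp add: sum_distrib_left)
  also have "\<dots> = (\<Sum>i\<le>m. of_nat (m choose i) * of_real x ^ i * (if n dvd (i+1) then of_nat n else 0))"
    unfolding w_def by (intro sum.cong refl) (simp only: roots_sum[OF assms])
  also have "\<dots> = of_nat n * complex_of_real (\<Sum>i\<le>m. if n dvd (i+1) then real (m choose i) * x^i else 0)"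
    by (simp add: sum_distrib_left of_real_sum if_distrib mult_ac cong: if_cong)
  finally show ?thesis unfolding w_def by simp
qed

lemma norm_lt_aux:
  fixes z :: complex and x :: real
  assumes "norm z = 1" "z \<noteq> 1" "x > 0"
  shows "norm (1 + of_real x * z) < 1 + x"
proof -
  have n2: "(Re z)^2 + (Im z)^2 = 1" using assms(1) cmod_power2[of z] by simp
  have "Re z \<le> 1" using abs_Re_le_cmod[of z] assms(1) by simp
  moreover have "Re z \<noteq> 1"
  proof
    assume "Re z = 1"
    with n2 have "Im z = 0" by simp
    with \<open>Re z = 1\<close> have "z = 1" by (simp add: complex_eq_iff)
    with assms(2) show False by simp
  qed
  ultimately have lt: "Re z < 1" by simp
  have "(norm (1 + of_real x * z))^2 = (1 + x * Re z)^2 + (x * Im z)^2"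
    by (simp add: cmod_power2)
  also have "\<dots> = 1 + 2*x*Re z + x^2 * ((Re z)^2 + (Im z)^2)"
    by (simp add: power2_eq_square algebra_simps)
  also have "\<dots> = 1 + 2*x*Re z + x^2" using n2 by simp
  also have "\<dots> < (1 + x)^2" using lt assms(3) by (simp add: power2_eq_square algebra_simps)
  finally show ?thesis using assms(3)
    by (smt (verit) norm_ge_zero power_mono)
qed

lemma S_limit:
  fixes n :: nat and x :: real assumes n: "n > 0" and x: "x > 0"
  shows "(\<lambda>m. (\<Sum>i\<le>m. if n dvd (i+1) then real (m choose i) * x^i else 0) / (1+x)^m) \<longlonglongrightarrow> 1 / real n"
proof -
  define w where "w = cis (2*pi/real n)"
  define S where "S m = (\<Sum>i\<le>m. if n dvd (i+1) then real (m choose i) * x^i else 0)" for m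
  have eq: "complex_of_real (real n * (S m / (1+x)^m)) =
      (\<Sum>j<n. w^j * ((1 + of_real x * w^j) / (1 + of_real x))^m)" for m
  proof -
    have "complex_of_real (real n * (S m / (1+x)^m)) = (of_nat n * complex_of_real (S m)) / (1 + of_real x)^m"
      by simp
    also have "\<dots> = (\<Sum>j<n. w ^ j * (1 + of_real x * w ^ j)^m) / (1 + of_real x)^m"
      unfolding S_def w_def by (subst filter_identity[OF n]) simp
    also have "\<dots> = (\<Sum>j<n. w^j * ((1 + of_real x * w^j) / (1 + of_real x))^m)"
      by (simp add: sum_divide_distrib power_divide)
    finally show ?thesis .
  qed
  have "(\<lambda>m. \<Sum>j<n. w^j * ((1 + of_real x * w^j) / (1 + of_real x))^m)
          \<longlonglongrightarrow> (\<Sum>j<n. if j = 0 then 1 else 0)"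
  proof (intro tendsto_sum)
    fix j assume j: "j \<in> {..<n}"
    show "(\<lambda>m. w^j * ((1 + of_real x * w^j) / (1 + of_real x))^m) \<longlonglongrightarrow> (if j = 0 then 1 else 0)"
    proof (cases "j = 0")
      case True
      have "1 + complex_of_real x \<noteq> 0"
        using x by (metis of_real_1 of_real_add of_real_eq_0_iff add_pos_pos less_numeral_extra(1) less_irrefl)
      then show ?thesis using True by simp
    next
      case False
      have nz: "w^j \<noteq> 1" unfolding w_def using omega_pow_eq_1[OF n, of j] j False
        by (auto dest: dvd_imp_le)
      have nw: "norm (w^j) = 1" unfolding w_def by (simp add: norm_power)
      have "norm ((1 + of_real x * w^j) / (1 + of_real x)) < 1"
      proof -
        have "norm (1 + complex_of_real x) = 1 + x" using x
          by (metis abs_of_pos add_pos_pos norm_of_real of_real_1 of_real_add zero_less_one)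
        then show ?thesis using norm_lt_aux[OF nw nz x] x by (simp add: norm_divide)
      qed
      hence "(\<lambda>m. ((1 + of_real x * w^j) / (1 + of_real x))^m) \<longlonglongrightarrow> 0"
        by (rule LIMSEQ_power_zero)
      hence "(\<lambda>m. w^j * ((1 + of_real x * w^j) / (1 + of_real x))^m) \<longlonglongrightarrow> w^j * 0"
        by (intro tendsto_mult tendsto_const)
      then show ?thesis using False by simp
    qed
  qed
  also have "(\<Sum>j<n. if j = 0 then 1 else 0 :: complex) = complex_of_real 1"
    using n by (simp add: sum.delta)
  finally have "(\<lambda>m. complex_of_real (real n * (S m / (1+x)^m))) \<longlonglongrightarrow> complex_of_real 1"
    by (simp only: eq)
  hence "(\<lambda>m. real n * (S m / (1+x)^m)) \<longlonglongrightarrow> 1"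
    by (simp only: tendsto_of_real_iff)
  hence "(\<lambda>m. (real n * (S m / (1+x)^m)) / real n) \<longlonglongrightarrow> 1 / real n"
    by (intro tendsto_divide tendsto_const) (use n in auto)
  thus ?thesis using n unfolding S_def by simp
qed


definition Fsum :: "nat \<Rightarrow> nat \<Rightarrow> nat \<Rightarrow> 'a::comm_semiring_1 \<Rightarrow> 'a" where
  "Fsum a n m N = (\<Sum>i\<le>m. of_nat (m choose i) * of_nat a ^ (i div n) * N ^ (i mod n))"

lemma Fsum_of_int: "real_of_int (Fsum a n m N) = Fsum a n m (real_of_int N)"
  by (simp add: Fsum_def)

lemma Fsum_nonneg: "(N::int) \<ge> 0 \<Longrightarrow> Fsum a n m N \<ge> 0"
  unfolding Fsum_def by (intro sum_nonneg) simp

lemma F_mod: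
  fixes N :: int
  assumes "N \<ge> 0" "Fsum a n m N < N^n - int a"
  shows "(N+1)^m mod (N^n - int a) = Fsum a n m N"
proof -
  define M where "M = N^n - int a"
  have b: "(N+1)^m = (\<Sum>i\<le>m. of_nat (m choose i) * N^i * 1^(m-i))"
    by (rule binomial_ring)
  have t: "(of_nat (m choose i) * N^i) mod M = (of_nat (m choose i) * int a ^ (i div n) * N ^ (i mod n)) mod M" for i
  proof -
    have "N^n = M + int a" unfolding M_def by simp
    hence "N^n mod M = int a mod M" by simp
    hence "(N^n)^(i div n) mod M = int a ^ (i div n) mod M" by (metis power_mod)
    hence "((N^n)^(i div n) * N^(i mod n)) mod M = (int a ^ (i div n) * N^(i mod n)) mod M"
      by (metis mod_mult_left_eq)
    moreover have "N^i = (N^n)^(i div n) * N^(i mod n)"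
    proof -
      have "N^i = N^(n*(i div n) + i mod n)" by simp
      thus ?thesis by (simp only: power_add power_mult)
    qed
    ultimately show ?thesis by (metis mod_mult_right_eq mult.assoc)
  qed
  have "(N+1)^m mod M = (\<Sum>i\<le>m. (of_nat (m choose i) * N^i) mod M) mod M"
    unfolding b by (simp add: mod_sum_eq)
  also have "\<dots> = (\<Sum>i\<le>m. (of_nat (m choose i) * int a ^ (i div n) * N ^ (i mod n)) mod M) mod M"
    using t by simp
  also have "\<dots> = Fsum a n m N mod M" unfolding Fsum_def by (simp add: mod_sum_eq)
  also have "\<dots> = Fsum a n m N" using assms Fsum_nonneg[of N a n m] unfolding M_def
    by (simp add: mod_pos_pos_trivial)
  finally show ?thesis unfolding M_def .
qed

definition Acoef :: "nat \<Rightarrow> nat \<Rightarrow> nat \<Rightarrow> real" where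
  "Acoef a n m = (\<Sum>i\<le>m. if i mod n = n - 1 then real (m choose i) * real a ^ (i div n) else 0)"

definition Grest :: "nat \<Rightarrow> nat \<Rightarrow> nat \<Rightarrow> real \<Rightarrow> real" where
  "Grest a n m N = (\<Sum>i\<le>m. if i mod n = n - 1 then 0 else real (m choose i) * real a ^ (i div n) * N ^ (i mod n))"

lemma F_decomp: "n > 0 \<Longrightarrow> Fsum a n m (N::real) = N^(n-1) * Acoef a n m + Grest a n m N"
  unfolding Fsum_def Acoef_def Grest_def sum_distrib_left sum.distrib[symmetric]
  by (intro sum.cong refl) auto

lemma binom_sum_real: "(\<Sum>i\<le>m. real (m choose i) * real a ^ i) = (1 + real a)^m"
  using binomial_ring[of "real a" 1 m] by (simp add: add.commute)

lemma Grest_bounds: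
  assumes "n > 0" "(N::real) \<ge> 1" "a \<ge> 1"
  shows "Grest a n m N \<ge> 0" "Grest a n m N * N \<le> N^(n-1) * (1 + real a)^m"
proof -
  show "Grest a n m N \<ge> 0" unfolding Grest_def using assms by (intro sum_nonneg) auto
  have "Grest a n m N * N \<le> (\<Sum>i\<le>m. N^(n-1) * (real (m choose i) * real a ^ i))"
    unfolding Grest_def sum_distrib_right
  proof (intro sum_mono)
    fix i assume "i \<in> {..m}"
    show "(if i mod n = n - 1 then 0 else real (m choose i) * real a ^ (i div n) * N ^ (i mod n)) * N
          \<le> N ^ (n - 1) * (real (m choose i) * real a ^ i)"
    proof (cases "i mod n = n - 1")
      case False
      have "i mod n < n" using assms by simp
      with False have "i mod n + 1 \<le> n - 1" by linarith
      hence p: "N ^ (i mod n) * N \<le> N^(n-1)"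
        using assms by (metis power_Suc2 Suc_eq_plus1 power_increasing)
      have q: "real a ^ (i div n) \<le> real a ^ i" using assms by (intro power_increasing) auto
      have "real (m choose i) * real a ^ (i div n) * N ^ (i mod n) * N
           = real (m choose i) * real a ^ (i div n) * (N ^ (i mod n) * N)" by simp
      also have "\<dots> \<le> real (m choose i) * real a ^ i * N^(n-1)"
        using p q assms by (intro mult_mono) auto
      finally show ?thesis using False by (simp add: mult_ac)
    qed (use assms in auto)
  qed
  also have "\<dots> = N^(n-1) * (1 + real a)^m"
    by (simp add: sum_distrib_left[symmetric] binom_sum_real)
  finally show "Grest a n m N * N \<le> N^(n-1) * (1 + real a)^m" .
qed

lemma Fsum_bound:
  assumes "n > 0" "(N::real) \<ge> 1" "a \<ge> 1"
  shows "Fsum a n m N \<le> N^(n-1) * (1 + real a)^m"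
proof -
  have "Fsum a n m N \<le> (\<Sum>i\<le>m. N^(n-1) * (real (m choose i) * real a ^ i))"
    unfolding Fsum_def
  proof (intro sum_mono)
    fix i assume "i \<in> {..m}"
    have "i mod n \<le> n - 1" using assms by (simp add: less_Suc_eq_le[symmetric])
    hence p: "N ^ (i mod n) \<le> N^(n-1)" using assms by (intro power_increasing) auto
    have q: "real a ^ (i div n) \<le> real a ^ i" using assms by (intro power_increasing) auto
    show "real (m choose i) * real a ^ (i div n) * N ^ (i mod n) \<le> N ^ (n - 1) * (real (m choose i) * real a ^ i)"
      using mult_mono[OF mult_left_mono[OF q] p] assms by (simp add: mult_ac)
  qed
  also have "\<dots> = N^(n-1) * (1 + real a)^m"
    by (simp add: sum_distrib_left[symmetric] binom_sum_real)
  finally show ?thesis .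
qed

lemma mod_iff_dvd: "(n::nat) > 0 \<Longrightarrow> (i mod n = n - 1) \<longleftrightarrow> n dvd (i + 1)"
proof -
  assume n: "n > 0"
  have "(i + 1) mod n = (i mod n + 1) mod n" by (metis mod_add_left_eq)
  moreover have "i mod n < n" using n by simp
  ultimately show ?thesis
    by (cases "i mod n + 1 = n") (auto simp: dvd_eq_mod_eq_0)
qed

lemma Acoef_S:
  assumes n: "n > 0" and al: "al ^ n = real a" "al > 0"
  shows "Acoef a n m * real a = al * (\<Sum>i\<le>m. if n dvd (i+1) then real (m choose i) * al^i else 0)"
  unfolding Acoef_def sum_distrib_right sum_distrib_left
proof (intro sum.cong refl)
  fix i
  show "(if i mod n = n - 1 then real (m choose i) * real a ^ (i div n) else 0) * real a =
        al * (if n dvd i + 1 then real (m choose i) * al ^ i else 0)"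
  proof (cases "i mod n = n - 1")
    case True
    have "n * (i div n) + i mod n = i" by simp
    hence "i + 1 = n * (i div n) + n" using n True by linarith
    hence "al ^ (i+1) = (al^n)^(i div n) * al^n" by (simp add: power_add power_mult)
    hence "real a ^ (i div n) * real a = al * al^i" using al by simp
    then show ?thesis using True mod_iff_dvd[OF n] by (simp add: mult_ac)
  qed (use mod_iff_dvd[OF n] in auto)
qed

lemma numeric:
  fixes a k n :: nat
  assumes "a \<ge> 1" "n > 0" "k \<ge> 2 * (1 + a)"
  shows "(1 + a)^(k*n+1) + a < k^(k*n)"
proof -
  define b where "b = 1 + a"
  have "b \<le> b^(k*n+1)" unfolding b_def by (rule self_le_power) auto
  hence "a < b^(k*n+1)" unfolding b_def by simp
  hence "b^(k*n+1) + a < 2 * b^(k*n+1)" by simp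
  also have "\<dots> = b^(k*n) * (2*b)" by simp
  also have "2*b \<le> 2^(k*n)"
  proof -
    have "2*b \<le> k" using assms b_def by simp
    also have "k < 2^k" by (rule less_exp)
    also have "2^k \<le> (2::nat)^(k*n)" using assms by (intro power_increasing) auto
    finally show ?thesis by simp
  qed
  hence "b^(k*n) * (2*b) \<le> b^(k*n) * 2^(k*n)" by simp
  also have "\<dots> = (2*b)^(k*n)" by (simp add: power_mult_distrib)
  also have "\<dots> \<le> k^(k*n)" using assms b_def by (intro power_mono) auto
  finally show ?thesis unfolding b_def .
qed


lemma w_limit:
  assumes "a \<ge> 1" "n > 0"
  shows "(\<lambda>k::nat. (1 + real a)^(k*n+1) / real k^(k*n)) \<longlonglongrightarrow> 0"
proof (rule tendsto_sandwich[of "\<lambda>_. 0" _ _ "\<lambda>k. (1 + real a) * (1/2)^k"])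
  show "\<forall>\<^sub>F k in sequentially. 0 \<le> (1 + real a)^(k*n+1) / real k^(k*n)" by simp
  show "\<forall>\<^sub>F k in sequentially. (1 + real a)^(k*n+1) / real k^(k*n) \<le> (1 + real a) * (1/2)^k"
    using eventually_ge_at_top[of "2 * (1 + a)"]
  proof eventually_elim
    case (elim k)
    have kpos: "real k > 0" using elim by simp
    have r: "(1 + real a) / real k \<le> 1/2" using elim kpos by (simp add: field_simps)
    have "(1 + real a)^(k*n+1) / real k^(k*n) = (1 + real a) * ((1 + real a) / real k)^(k*n)"
      by (simp add: power_divide)
    also have "\<dots> \<le> (1 + real a) * (1/2)^(k*n)"
      using r by (intro mult_left_mono power_mono) auto
    also have "\<dots> \<le> (1 + real a) * (1/2)^k"
      using assms by (intro mult_left_mono power_decreasing) auto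
    finally show ?case .
  qed
  show "(\<lambda>_. 0) \<longlonglongrightarrow> (0::real)" by simp
  have "(\<lambda>k. (1 + real a) * (1/2::real)^k) \<longlonglongrightarrow> (1 + real a) * 0"
    by (intro tendsto_mult tendsto_const LIMSEQ_power_zero) simp
  thus "(\<lambda>k. (1 + real a) * (1/2::real)^k) \<longlonglongrightarrow> 0" by simp
qed


theorem theorem6p2:
  fixes a n :: nat
  assumes "a > 1" and "n > 0"
  shows "((\<lambda>k::nat.
            real_of_int (((int k ^ (k * n) + 1) ^ (k * n + 1)) mod (int k ^ (k * n^2) - int a))
          / real_of_int (((int k ^ (k * n) + 1) ^ (k * n)) mod (int k ^ (k * n^2) - int a)) - 1)
         \<longlongrightarrow> root n (real a)) sequentially"
proof -
  have a1: "a \<ge> 1" using assms by simp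
  have apos: "real a > 0" using assms by simp
  define al where "al = root n (real a)"
  have alpos: "al > 0" using assms by (simp add: al_def)
  have aln: "al^n = real a" using assms by (simp add: al_def)
  define S where "S m = (\<Sum>i\<le>m. if n dvd (i+1) then real (m choose i) * al^i else 0)" for m
  define s where "s m = S m / (1+al)^m" for m
  have slim: "s \<longlonglongrightarrow> 1/real n" unfolding s_def S_def using S_limit[OF assms(2) alpos] by simp
  have s0: "(\<lambda>k. s (k*n)) \<longlonglongrightarrow> 1/real n"
    using LIMSEQ_subseq_LIMSEQ[OF slim, of "\<lambda>k. k*n"] assms(2) by (simp add: strict_mono_def o_def)
  have s1: "(\<lambda>k. s (k*n+1)) \<longlonglongrightarrow> 1/real n"
    using LIMSEQ_subseq_LIMSEQ[OF slim, of "\<lambda>k. k*n+1"] assms(2) by (simp add: strict_mono_def o_def)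
  define N where "N k = real k ^ (k*n)" for k
  define P where "P k = N k ^ (n-1)" for k
  define D where "D k = P k * (al / real a) * (1+al)^(k*n)" for k
  define e0 where "e0 k = Grest a n (k*n) (N k) / D k" for k
  define e1 where "e1 k = Grest a n (k*n+1) (N k) / D k" for k
  define W where "W k = (1 + real a)^(k*n+1) / real k^(k*n)" for k
  have Wlim: "W \<longlonglongrightarrow> 0" unfolding W_def using w_limit[OF a1 assms(2)] .
  have NP: "N k \<ge> 1" "P k \<ge> 1" if "k \<ge> 1" for k
    using that by (simp_all add: N_def P_def one_le_power)
  have Dpos: "D k > 0" if "k \<ge> 1" for k
    using NP[OF that] alpos apos by (simp add: D_def)
  have ebound: "0 \<le> Grest a n m (N k) / D k \<and> Grest a n m (N k) / D k \<le> (real a / al) * W k"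
    if k: "k \<ge> 1" and m: "m \<le> k*n+1" for k m
  proof
    note gb = Grest_bounds[OF assms(2) NP(1)[OF k] a1, of m]
    show "0 \<le> Grest a n m (N k) / D k" using gb Dpos[OF k] by simp
    have "Grest a n m (N k) * N k \<le> P k * (1 + real a)^(k*n+1)"
    proof -
      have "(1 + real a)^m \<le> (1 + real a)^(k*n+1)" using m by (intro power_increasing) auto
      hence "P k * (1 + real a)^m \<le> P k * (1 + real a)^(k*n+1)"
        using NP[OF k] by (intro mult_left_mono) auto
      thus ?thesis using gb(2) unfolding P_def by linarith
    qed
    hence g: "Grest a n m (N k) \<le> P k * (1 + real a)^(k*n+1) / N k"
      using NP[OF k] by (simp add: pos_le_divide_eq)
    have "P k * (1 + real a)^(k*n+1) / N k \<le> P k * (1 + real a)^(k*n+1) / N k * (1+al)^(k*n)"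
    proof -
      have y1: "1 \<le> (1+al)^(k*n)" using alpos by (intro one_le_power) simp
      have x0: "0 \<le> P k * (1 + real a)^(k*n+1) / N k" using NP[OF k] by simp
      show ?thesis using mult_left_mono[OF y1 x0] by simp
    qed
    also have "\<dots> = (real a / al) * W k * D k"
    proof -
      have "W k = (1 + real a)^(k*n+1) / N k" unfolding W_def N_def by simp
      thus ?thesis unfolding D_def using alpos apos by simp
    qed
    finally show "Grest a n m (N k) / D k \<le> (real a / al) * W k"
      using g Dpos[OF k] by (simp add: pos_divide_le_eq)
  qed
  have elim: "(\<lambda>k. Grest a n (k*n+j) (N k) / D k) \<longlonglongrightarrow> 0" if "j \<le> 1" for j
  proof (rule tendsto_sandwich[of "\<lambda>_. 0" _ _ "\<lambda>k. (real a / al) * W k"])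
    show "\<forall>\<^sub>F k in sequentially. 0 \<le> Grest a n (k*n+j) (N k) / D k"
      using eventually_ge_at_top[of 1] by eventually_elim (use ebound that in auto)
    show "\<forall>\<^sub>F k in sequentially. Grest a n (k*n+j) (N k) / D k \<le> (real a / al) * W k"
      using eventually_ge_at_top[of 1] by eventually_elim (use ebound that in auto)
    show "(\<lambda>_. 0) \<longlonglongrightarrow> (0::real)" by simp
    show "(\<lambda>k. (real a / al) * W k) \<longlonglongrightarrow> 0"
      using tendsto_mult[OF tendsto_const Wlim, of "real a / al"] by simp
  qed
  have e0lim: "e0 \<longlonglongrightarrow> 0" using elim[of 0] unfolding e0_def by simp
  have e1lim: "e1 \<longlonglongrightarrow> 0" using elim[of 1] unfolding e1_def by simp
  define u where "u k = (1+al) * s (k*n+1) + e1 k" for k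
  define v where "v k = s (k*n) + e0 k" for k
  have ulim: "u \<longlonglongrightarrow> (1+al) * (1/real n) + 0"
    unfolding u_def by (intro tendsto_add tendsto_mult tendsto_const s1 e1lim)
  have vlim: "v \<longlonglongrightarrow> 1/real n + 0"
    unfolding v_def by (intro tendsto_add s0 e0lim)
  have "(\<lambda>k. u k / v k - 1) \<longlonglongrightarrow> ((1+al) * (1/real n) + 0) / (1/real n + 0) - 1"
    using assms(2) by (intro tendsto_diff tendsto_divide ulim vlim tendsto_const) auto
  also have "((1+al) * (1/real n) + 0) / (1/real n + 0) - 1 = al" using assms(2) by simp
  finally have main: "(\<lambda>k. u k / v k - 1) \<longlonglongrightarrow> al" .
  have Fdecomp: "Fsum a n m (N k) = D k * (S m / (1+al)^(k*n)) + Grest a n m (N k)" for m k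
  proof -
    have "Acoef a n m = (al / real a) * S m"
      using Acoef_S[OF assms(2) aln alpos, of m] apos unfolding S_def by (simp add: field_simps)
    thus ?thesis using F_decomp[OF assms(2), of a m "N k"]
      unfolding D_def P_def using alpos by (simp add: field_simps)
  qed
  have Fbound: "Fsum a n m (int k ^ (k*n)) < (int k ^ (k*n))^n - int a"
    if k: "k \<ge> 2 * (1 + a)" and m: "m \<le> k*n+1" for k m
  proof -
    have k1: "k \<ge> 1" using k by simp
    have num: "(1 + real a)^(k*n+1) + real a < N k"
      using numeric[OF a1 assms(2) k] unfolding N_def
      by (metis (mono_tags) of_nat_1 of_nat_add of_nat_less_iff of_nat_power)
    have "Fsum a n m (N k) \<le> P k * (1 + real a)^m"
      using Fsum_bound[OF assms(2) NP(1)[OF k1] a1] unfolding P_def .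
    also have "\<dots> \<le> P k * (1 + real a)^(k*n+1)"
      using NP[OF k1] m by (intro mult_left_mono power_increasing) auto
    also have "\<dots> + real a \<le> P k * ((1 + real a)^(k*n+1) + real a)"
    proof -
      have "real a * 1 \<le> real a * P k" using NP[OF k1] by (intro mult_left_mono) auto
      thus ?thesis by (simp add: algebra_simps)
    qed
    also have "\<dots> < P k * N k" using NP[OF k1] num by simp
    also have "P k * N k = N k ^ n" unfolding P_def using assms(2)
      by (metis power_minus_mult)
    finally have "Fsum a n m (N k) < N k ^ n - real a" by simp
    hence "real_of_int (Fsum a n m (int k ^ (k*n))) < real_of_int ((int k ^ (k*n))^n - int a)"
      by (simp add: Fsum_of_int N_def)
    thus ?thesis by (simp only: of_int_less_iff)
  qed
  have ev: "\<forall>\<^sub>F k in sequentially. u k / v k - 1 =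
            real_of_int (((int k ^ (k * n) + 1) ^ (k * n + 1)) mod (int k ^ (k * n^2) - int a))
          / real_of_int (((int k ^ (k * n) + 1) ^ (k * n)) mod (int k ^ (k * n^2) - int a)) - 1"
    using eventually_ge_at_top[of "2 * (1 + a)"]
  proof eventually_elim
    case (elim k)
    have k1: "k \<ge> 1" using elim by simp
    have pw: "int k ^ (k * n^2) = (int k ^ (k*n))^n"
      by (simp add: power2_eq_square power_mult[symmetric] mult.assoc)
    have Nnn: "int k ^ (k*n) \<ge> 0" by simp
    have r1: "real_of_int (((int k ^ (k * n) + 1) ^ (k * n + 1)) mod (int k ^ (k * n^2) - int a)) = D k * u k"
    proof -
      have "real_of_int (((int k ^ (k * n) + 1) ^ (k * n + 1)) mod (int k ^ (k * n^2) - int a))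
          = Fsum a n (k*n+1) (N k)"
        unfolding pw using F_mod[OF Nnn Fbound[OF elim, of "k*n+1"]] by (simp add: Fsum_of_int N_def)
      also have "\<dots> = D k * u k"
      proof -
        have e: "(1+al)^(k*n+1) = (1+al)*(1+al)^(k*n)" by simp
        have d0: "D k \<noteq> 0" "1 + al \<noteq> 0" using Dpos[OF k1] alpos by auto
        have A: "(1+al) * (S (k*n+1) / (1+al)^(k*n+1)) = S (k*n+1) / (1+al)^(k*n)"
          unfolding e using d0 by simp
        have B: "D k * (Grest a n (k*n+1) (N k) / D k) = Grest a n (k*n+1) (N k)" using d0 by simp
        show ?thesis unfolding u_def e1_def s_def
          by (simp only: Fdecomp distrib_left A B mult.assoc[symmetric])
      qed
      finally show ?thesis .
    qed
    have r0: "real_of_int (((int k ^ (k * n) + 1) ^ (k * n)) mod (int k ^ (k * n^2) - int a)) = D k * v k"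
    proof -
      have "real_of_int (((int k ^ (k * n) + 1) ^ (k * n)) mod (int k ^ (k * n^2) - int a))
          = Fsum a n (k*n) (N k)"
        unfolding pw using F_mod[OF Nnn Fbound[OF elim, of "k*n"]] by (simp add: Fsum_of_int N_def)
      also have "\<dots> = D k * v k"
      proof -
        have B: "D k * (Grest a n (k*n) (N k) / D k) = Grest a n (k*n) (N k)" using Dpos[OF k1] by simp
        show ?thesis unfolding v_def e0_def s_def
          by (simp only: Fdecomp distrib_left B)
      qed
      finally show ?thesis .
    qed
    show ?case unfolding r1 r0 using Dpos[OF k1] by simp
  qed
  show ?thesis using Lim_transform_eventually[OF main ev] unfolding al_def .
qed


end
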